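(* Let $n$ be an odd positive integer and let $i_1,\dots,i_s$ with $0\le i_1<\dots<i_s\le n-1$ be integers no two of which belong to the same cyclotomic coset modulo $n$. Let $g$ be a positive integer with $(2^g-1)\mid n$. Suppose there exists an integer $r$ with $0<r<2^g-1$ and $\gcd(r,2^g-1)=1$ such that all of $i_1,\dots,i_s$ lie in $\mathcal{C}_r^{(2^g-1)}$, i.e. each $i_t \bmod (2^g-1)$ belongs to $\{r2^k\bmod(2^g-1):k\ge0\}$. Then the binary cyclic code of length $n$ with generator polynomial $\prod_{t=1}^{s}M_{i_t}(x)$ has minimum distance $d\le 3$. If moreover $\gcd(n,i_1,\dots,i_s)=1$, then $d=3$.
   Context: For odd $n$, $\alpha$ denotes a primitive $n$th root of unity in an extension field of $\mathbb{F}_2$. The cyclotomic coset of $r$ modulo $N$ (over $\mathbb{F}_2$) is $\mathcal{C}_r^{(N)}=\{r2^k \bmod N: k=0,1,\dots\}$. $M_i(x)=\prod_{t\in\mathcal{C}_i^{(n)}}(x-\alpha^t)\in\mathbb{F}_2[x]$ is the minimal polynomial of $\alpha^i$. The binary cyclic code with generator polynomial $G(x)\mid x^n-1$ is $\{c(x)\in\mathbb{F}_2[x]/(x^n-1): G(x)\mid c(x)\}$. *)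

theory Defs
  imports "HOL-Computational_Algebra.Polynomial" "HOL-Library.Z2"
begin

definition cyc_coset :: "nat \<Rightarrow> nat \<Rightarrow> nat set" where
  "cyc_coset r N = {r * 2 ^ k mod N | k. True}"

definition prim_root :: "'a::field \<Rightarrow> nat \<Rightarrow> bool" where
  "prim_root \<alpha> n \<longleftrightarrow> \<alpha> ^ n = 1 \<and> (\<forall>k. 0 < k \<and> k < n \<longrightarrow> \<alpha> ^ k \<noteq> 1)"

definition min_poly :: "'a::field \<Rightarrow> nat \<Rightarrow> nat \<Rightarrow> 'a poly" where
  "min_poly \<alpha> n i = (\<Prod>t\<in>cyc_coset i n. [:- (\<alpha> ^ t), 1:])"

text \<open>Binary cyclic code of length n with generator polynomial G (a polynomial with
  coefficients in F_2, here given via its image in the extension field):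
  codewords are the F_2-polynomials of degree < n (representatives of F_2[x]/(x^n-1))
  divisible by G.\<close>
definition cyclic_code :: "nat \<Rightarrow> 'a::field poly \<Rightarrow> bit poly set" where
  "cyclic_code n G = {c. degree c < n \<and> G dvd map_poly of_bit c}"

definition weight :: "bit poly \<Rightarrow> nat" where
  "weight c = card {k. coeff c k \<noteq> 0}"

definition min_dist :: "bit poly set \<Rightarrow> nat" where
  "min_dist C = (LEAST w. \<exists>c\<in>C. c \<noteq> 0 \<and> weight c = w)"

end

theory Submission
  imports Defs "HOL-Number_Theory.Cong"
begin


lemma char2_add_self:
  assumes "CHAR('a::field) = 2" shows "(x::'a) + x = 0"
proof -
  have "(of_nat 2::'a) = 0" using assms by (metis of_nat_eq_0_iff_char_dvd dvd_refl)
  hence "of_nat 2 * x = 0" by simp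
  thus ?thesis by (simp add: algebra_simps mult_2)
qed

lemma char2_frob:
  assumes "CHAR('a::field) = 2" shows "((x::'a) + y) ^ (2 ^ k) = x ^ (2^k) + y ^ (2^k)"
proof (induction k)
  case 0 then show ?case by simp
next
  case (Suc k)
  have sq: "(a + b)^2 = a^2 + b^2" for a b :: 'a
  proof -
    have "(a+b)^2 = a^2 + b^2 + (a*b + a*b)" by (simp add: power2_eq_square algebra_simps)
    thus ?thesis using char2_add_self[OF assms] by simp
  qed
  have "(x+y)^(2^Suc k) = ((x+y)^(2^k))^2" by (simp add: power_mult[symmetric] mult.commute)
  also have "\<dots> = (x^(2^k))^2 + (y^(2^k))^2" using Suc sq by simp
  also have "\<dots> = x^(2^Suc k) + y^(2^Suc k)" by (simp add: power_mult[symmetric] mult.commute)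
  finally show ?case .
qed

lemma prim_root_pow_eq_1:
  assumes "prim_root \<alpha> n" "0 < n"
  shows "\<alpha> ^ k = 1 \<longleftrightarrow> n dvd k"
proof -
  have an: "\<alpha>^n = 1" using assms unfolding prim_root_def by simp
  have "\<alpha> ^ k = \<alpha> ^ (n * (k div n) + k mod n)" by (metis mult_div_mod_eq)
  also have "\<dots> = \<alpha> ^ (k mod n)" by (simp only: power_add power_mult an power_one mult_1)
  finally have e: "\<alpha>^k = \<alpha>^(k mod n)" .
  show ?thesis
  proof
    assume "\<alpha>^k = 1"
    hence "\<alpha>^(k mod n) = 1" using e by simp
    moreover have "k mod n < n" using assms by simp
    ultimately have "k mod n = 0" using assms unfolding prim_root_def by (metis neq0_conv)
    thus "n dvd k" by auto
  qed (auto simp: an power_mult)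
qed

lemma prim_root_pow_mod:
  assumes "\<alpha> ^ n = (1::'a::field)"
  shows "\<alpha> ^ k = \<alpha> ^ (k mod n)"
proof -
  have "\<alpha> ^ k = \<alpha> ^ (n * (k div n) + k mod n)" by (metis mult_div_mod_eq)
  also have "\<dots> = \<alpha> ^ (k mod n)" by (simp only: power_add power_mult assms power_one mult_1)
  finally show ?thesis .
qed

lemma linprod_dvd:
  fixes p :: "'a::field poly"
  assumes "finite A" "\<forall>y\<in>A. poly p y = 0"
  shows "(\<Prod>y\<in>A. [:-y,1:]) dvd p"
  using assms
proof (induction A rule: finite_induct)
  case empty then show ?case by simp
next
  case (insert a A)
  then obtain q where q: "p = (\<Prod>y\<in>A. [:-y,1:]) * q" by (auto elim: dvdE)
  have "poly (\<Prod>y\<in>A. [:-y,1:]) a \<noteq> 0" using insert(1,2) by (auto simp: poly_prod)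
  moreover have "poly p a = 0" using insert by simp
  ultimately have "poly q a = 0" using q by simp
  hence "[:-a,1:] dvd q" by (simp add: poly_eq_0_iff_dvd)
  then obtain q' where q': "q = [:-a,1:] * q'" by (auto elim: dvdE)
  have "p = ([:-a,1:] * (\<Prod>y\<in>A. [:-y,1:])) * q'" using q q' by (metis mult.assoc mult.commute)
  thus ?case using insert(1,2) by (metis dvd_triv_left prod.insert)
qed

lemma coset_sub: "0 < N \<Longrightarrow> cyc_coset r N \<subseteq> {..<N}"
  unfolding cyc_coset_def by auto

lemma pow2_period:
  assumes "odd (n::nat)" shows "\<exists>e>0. [2^e = 1] (mod n)"
proof -
  have n0: "0 < n" using assms by (cases n) auto
  have "(\<lambda>k. (2::nat)^k mod n) ` {..n} \<subseteq> {..<n}" using n0 by auto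
  hence "card ((\<lambda>k. (2::nat)^k mod n) ` {..n}) < card {..n}"
    by (metis card_lessThan card_atMost card_mono finite_lessThan le_imp_less_Suc)
  hence "\<not> inj_on (\<lambda>k. (2::nat)^k mod n) {..n}" by (rule pigeonhole)
  then obtain a b where ab: "a \<noteq> b" "2^a mod n = 2^b mod n" unfolding inj_on_def by auto
  have key: "\<exists>e>0. [2^e = 1] (mod n)" if "a < b" "(2::nat)^a mod n = 2^b mod n" for a b
  proof -
    have "[2^a * 1 = 2^a * 2^(b-a)] (mod n)" using that by (simp add: cong_def power_add[symmetric])
    moreover have "coprime ((2::nat)^a) n" using assms by simp
    ultimately have "[1 = 2^(b-a)] (mod n)" using cong_mult_lcancel_nat by blast
    thus ?thesis using that by (intro exI[of _ "b-a"]) (auto simp: cong_sym)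
  qed
  show ?thesis using ab key by (metis linorder_neqE_nat)
qed

lemma coset_disj:
  assumes "odd n" "j \<in> cyc_coset a n" "j \<in> cyc_coset b n" "b < n"
  shows "b \<in> cyc_coset a n"
proof -
  have n0: "0 < n" using assms(1) by (cases n) auto
  obtain k where k: "j = a * 2^k mod n" using assms(2) unfolding cyc_coset_def by auto
  obtain l where l: "j = b * 2^l mod n" using assms(3) unfolding cyc_coset_def by auto
  obtain e where e0: "e > 0" and E: "[2^e = 1] (mod n)" using pow2_period[OF assms(1)] by blast
  have El: "[2^(e*l) = 1] (mod n)" using cong_pow[OF E, of l] by (simp add: power_mult)
  have "e*l \<ge> l" using e0 by simp
  have "[b = b * 2^(e*l)] (mod n)" using cong_mult[OF cong_refl[of b] El] by (simp add: cong_sym)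
  also have "b * 2^(e*l) = b * 2^l * 2^(e*l - l)" using \<open>e*l \<ge> l\<close>
    by (simp add: power_add[symmetric] mult.assoc)
  also have "[b * 2^l * 2^(e*l - l) = a * 2^k * 2^(e*l-l)] (mod n)"
  proof -
    have "[b*2^l = a*2^k] (mod n)" using k l by (simp add: cong_def)
    thus ?thesis by (rule cong_mult) simp
  qed
  finally have "[b = a * 2^(k + (e*l-l))] (mod n)" by (simp add: power_add mult.assoc)
  hence "b = a * 2^(k + (e*l-l)) mod n" using assms(4) by (simp add: cong_def)
  thus ?thesis unfolding cyc_coset_def by auto
qed



lemma exists_b:
  fixes \<gamma> :: "'a::field"
  assumes char2: "CHAR('a) = 2" and ord: "\<And>k. \<gamma>^k = 1 \<longleftrightarrow> m dvd k"
    and m: "m = 2^g - 1" and m1: "m > 1"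
  shows "\<exists>b. 1 < b \<and> b < m \<and> 1 + \<gamma> + \<gamma>^b = 0"
proof -
  have gm: "\<gamma>^m = 1" using ord by simp
  have g0: "\<gamma> \<noteq> 0"
  proof
    assume "\<gamma> = 0"
    thus False using gm m1 by (simp add: power_0_left)
  qed
  have inj: "inj_on (\<lambda>k. \<gamma>^k) {..<m}"
  proof (rule inj_onI)
    have aux: "a = b" if "\<gamma>^a = \<gamma>^b" "a \<le> b" "b < m" for a b
    proof -
      have "\<gamma>^b = \<gamma>^a * \<gamma>^(b-a)" using that(2) by (simp add: power_add[symmetric])
      hence "\<gamma>^(b-a) = 1" using that(1) g0 by simp
      hence "m dvd b - a" using ord by simp
      show ?thesis
      proof (rule ccontr)
        assume "a \<noteq> b"
        hence "0 < b - a" using that by auto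
        hence "m \<le> b - a" using \<open>m dvd b - a\<close> dvd_imp_le by blast
        thus False using that by auto
      qed
    qed
    fix a b assume "a \<in> {..<m}" "b \<in> {..<m}" "\<gamma>^a = \<gamma>^b"
    thus "a = b" using aux by (cases "a \<le> b") (auto, metis nat_le_linear)
  qed
  define P :: "'a poly" where "P = [:-1:] + Polynomial.monom 1 m"
  have degP: "degree P = m" unfolding P_def using m1
    by (subst degree_add_eq_right) (auto simp: degree_monom_eq)
  have P0: "P \<noteq> 0" using degP m1 by auto
  have polyP: "poly P y = 0 \<longleftrightarrow> y^m = 1" for y unfolding P_def by (simp add: poly_monom)
  have sub: "(\<lambda>k. \<gamma>^k) ` {..<m} \<subseteq> {y. poly P y = 0}"
  proof
    fix z assume "z \<in> (\<lambda>k. \<gamma>^k) ` {..<m}"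
    then obtain k where z: "z = \<gamma>^k" by auto
    have "z^m = (\<gamma>^m)^k" unfolding z by (metis power_mult mult.commute)
    thus "z \<in> {y. poly P y = 0}" using gm polyP by simp
  qed
  have cardR: "card {y. poly P y = 0} \<le> m" using card_poly_roots_bound[OF P0] degP by simp
  have eq: "(\<lambda>k. \<gamma>^k) ` {..<m} = {y. poly P y = 0}"
  proof (rule card_subset_eq[OF poly_roots_finite[OF P0] sub])
    have "card ((\<lambda>k. \<gamma>^k) ` {..<m}) = m" using card_image[OF inj] by simp
    moreover have "card ((\<lambda>k. \<gamma>^k) ` {..<m}) \<le> card {y. poly P y = 0}"
      by (rule card_mono[OF poly_roots_finite[OF P0] sub])
    ultimately show "card ((\<lambda>k. \<gamma>^k) ` {..<m}) = card {y. poly P y = 0}" using cardR by simp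
  qed
  define y where "y = 1 + \<gamma>"
  have "\<gamma> \<noteq> 1" using ord[of 1] m1 by auto
  have y0: "y \<noteq> 0"
  proof
    assume "y = 0"
    hence "\<gamma> = -1" unfolding y_def by (simp add: eq_neg_iff_add_eq_0 add.commute)
    moreover have "(-1::'a) = 1" using char2_add_self[OF char2, of 1] by (simp add: eq_neg_iff_add_eq_0)
    ultimately show False using \<open>\<gamma> \<noteq> 1\<close> by simp
  qed
  have pg: "(2::nat)^g = m + 1" using m m1 by simp
  have "y^(2^g) = 1 + \<gamma>^(2^g)" unfolding y_def using char2_frob[OF char2, of 1 \<gamma> g] by simp
  also have "\<gamma>^(2^g) = \<gamma>" using pg gm by simp
  finally have "y^(m+1) = y" using pg y_def by simp
  hence "y^m = 1" using y0 by simp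
  hence "y \<in> (\<lambda>k. \<gamma>^k) ` {..<m}" using eq polyP by simp
  then obtain b where b: "b < m" "y = \<gamma>^b" by auto
  have "b \<noteq> 0"
  proof
    assume "b = 0"
    hence "1 + \<gamma> = 1" using b y_def by simp
    thus False using g0 by simp
  qed
  moreover have "b \<noteq> 1" using b y_def by auto
  moreover have "1 + \<gamma> + \<gamma>^b = 0"
  proof -
    have "\<gamma>^b = 1 + \<gamma>" using b y_def by simp
    thus ?thesis using char2_add_self[OF char2, of "1+\<gamma>"] by (simp only:)
  qed
  ultimately show ?thesis using b by (intro exI[of _ b]) auto
qed

lemma codeword:
  assumes N0: "0 < N" and b: "1 < b" "b < m" and n: "n = m * N"
  defines "c \<equiv> Polynomial.monom (1::bit) 0 + Polynomial.monom 1 N + Polynomial.monom 1 (b*N)"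
  shows "degree c < n" "weight c = 3" "c \<noteq> 0"
    "map_poly (of_bit :: bit \<Rightarrow> 'a::field) c = Polynomial.monom 1 0 + Polynomial.monom 1 N + Polynomial.monom 1 (b*N)"
proof -
  have d: "0 \<noteq> N" "N \<noteq> b*N" "0 \<noteq> b*N" using N0 b by auto
  have co: "coeff c k = (if k = 0 \<or> k = N \<or> k = b*N then 1 else 0)" for k
    unfolding c_def using d by (auto simp: coeff_monom)
  have "{k. coeff c k \<noteq> 0} = {0, N, b*N}" using co by auto
  thus "weight c = 3" unfolding weight_def using d by simp
  show "c \<noteq> 0" using co[of 0] by auto
  have "b*N < n" "N < n" using n b N0 by simp_all
  hence "\<forall>k\<ge>n. coeff c k = 0" using co N0 by auto
  hence "degree c \<le> n - 1" by (intro degree_le) auto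
  thus "degree c < n" using \<open>N < n\<close> by linarith
  show "map_poly (of_bit :: bit \<Rightarrow> 'a::field) c = Polynomial.monom 1 0 + Polynomial.monom 1 N + Polynomial.monom 1 (b*N)"
    by (rule poly_eqI) (use d in \<open>auto simp: coeff_map_poly co coeff_monom\<close>)
qed



lemma pow_inj:
  fixes \<alpha> :: "'a::field"
  assumes "prim_root \<alpha> n" "0 < n"
  shows "inj_on (\<lambda>k. \<alpha>^k) {..<n}"
proof -
  have an: "\<alpha>^n = 1" using assms unfolding prim_root_def by simp
  have a0: "\<alpha> \<noteq> 0" using an assms(2) by (auto simp: power_0_left)
  have aux: "a = b" if "\<alpha>^a = \<alpha>^b" "a \<le> b" "b < n" for a b
  proof -
    have "\<alpha>^b = \<alpha>^a * \<alpha>^(b-a)" using that(2) by (simp add: power_add[symmetric])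
    hence "\<alpha>^(b-a) = 1" using that(1) a0 by simp
    hence d: "n dvd b - a" using prim_root_pow_eq_1[OF assms] by simp
    show ?thesis
    proof (rule ccontr)
      assume "a \<noteq> b"
      hence "0 < b - a" using that by auto
      hence "n \<le> b - a" using d dvd_imp_le by blast
      thus False using that by auto
    qed
  qed
  show ?thesis
  proof (rule inj_onI)
    fix a b assume "a \<in> {..<n}" "b \<in> {..<n}" "\<alpha>^a = \<alpha>^b"
    thus "a = b" using aux by (cases "a \<le> b") (auto, metis nat_le_linear)
  qed
qed

theorem theorem4:
  fixes \<alpha> :: "'a::field" and n s g r :: nat and i :: "nat \<Rightarrow> nat"
  assumes char2: "CHAR('a) = 2"
    and n_odd: "odd n" and n_pos: "0 < n"
    and alpha: "prim_root \<alpha> n"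
    and i_range: "\<forall>t\<in>{1..s}. i t \<le> n - 1"
    and i_mono: "\<forall>t\<in>{1..s}. \<forall>u\<in>{1..s}. t < u \<longrightarrow> i t < i u"
    and i_cosets: "\<forall>t\<in>{1..s}. \<forall>u\<in>{1..s}. t \<noteq> u \<longrightarrow> i u \<notin> cyc_coset (i t) n"
    and g_pos: "0 < g"
    and g_dvd: "(2 ^ g - 1) dvd n"
    and r_bounds: "0 < r" "r < 2 ^ g - 1"
    and r_coprime: "coprime r (2 ^ g - 1)"
    and i_in: "\<forall>t\<in>{1..s}. i t mod (2 ^ g - 1) \<in> cyc_coset r (2 ^ g - 1)"
  shows "min_dist (cyclic_code n (\<Prod>t\<in>{1..s}. min_poly \<alpha> n (i t))) \<le> 3
     \<and> (Gcd (insert n (i ` {1..s})) = 1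
          \<longrightarrow> min_dist (cyclic_code n (\<Prod>t\<in>{1..s}. min_poly \<alpha> n (i t))) = 3)"
proof -
  define m :: nat where "m = 2^g - 1"
  have m1: "m > 1" using r_bounds m_def by simp
  have an: "\<alpha>^n = 1" using alpha unfolding prim_root_def by simp
  have a0: "\<alpha> \<noteq> 0" using an n_pos by (auto simp: power_0_left)
  obtain N where nN: "n = m * N" using g_dvd m_def by (auto elim: dvdE)
  have N0: "0 < N" using n_pos nN by (cases N) auto
  define \<gamma> where "\<gamma> = \<alpha>^(N*r)"
  have ordg: "\<gamma>^k = 1 \<longleftrightarrow> m dvd k" for k
  proof -
    have "\<gamma>^k = \<alpha>^(N*(r*k))" unfolding \<gamma>_def by (simp add: power_mult[symmetric] mult.assoc)
    hence "\<gamma>^k = 1 \<longleftrightarrow> N*m dvd N*(r*k)" using prim_root_pow_eq_1[OF alpha n_pos] nN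
      by (simp add: mult.commute)
    also have "\<dots> \<longleftrightarrow> m dvd r*k" using N0 by simp
    also have "\<dots> \<longleftrightarrow> m dvd k" using r_coprime m_def
      by (simp add: coprime_dvd_mult_right_iff coprime_commute)
    finally show ?thesis .
  qed
  obtain b where b: "1 < b" "b < m" "1 + \<gamma> + \<gamma>^b = 0"
    using exists_b[OF char2 ordg m_def m1] by blast
  define c where "c = Polynomial.monom (1::bit) 0 + Polynomial.monom 1 N + Polynomial.monom 1 (b*N)"
  note cw = codeword[OF N0 b(1,2) nN, folded c_def]
  define P where "P = (map_poly of_bit c :: 'a poly)"
  have polyP: "poly P y = 1 + y^N + y^(b*N)" for y
    unfolding P_def cw(4) by (simp add: poly_monom)
  define G where "G = (\<Prod>t\<in>{1..s}. min_poly \<alpha> n (i t))"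
  define C where "C t = cyc_coset (i t) n" for t
  have Cfin: "finite (C t)" for t unfolding C_def using coset_sub[OF n_pos] finite_subset by blast
  have it_lt: "i t < n" if "t \<in> {1..s}" for t using i_range that n_pos by force
  have bper: "\<alpha>^(N*x) = \<alpha>^(N*(x mod m))" for x
    using prim_root_pow_mod[of "\<alpha>^N" m x] an nN by (simp add: power_mult[symmetric] mult.commute)
  have roots: "poly P (\<alpha>^j) = 0" if t: "t \<in> {1..s}" and j: "j \<in> C t" for t j
  proof -
    obtain k where k: "j = i t * 2^k mod n" using j unfolding C_def cyc_coset_def by auto
    obtain l where l: "i t mod m = r * 2^l mod m" using i_in t unfolding m_def cyc_coset_def by blast
    have mdn: "m dvd n" using nN by simp
    have "j mod m = i t * 2^k mod m" using k mdn by (simp add: mod_mod_cancel)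
    also have "\<dots> = ((i t mod m) * 2^k) mod m" by (simp add: mod_mult_left_eq)
    also have "\<dots> = ((r*2^l mod m) * 2^k) mod m" using l by simp
    also have "\<dots> = (r * 2^(l+k)) mod m" by (simp add: mod_mult_left_eq power_add mult.assoc)
    finally have jm: "j mod m = (r * 2^(l+k)) mod m" .
    define K where "K = l + k"
    have X: "(\<alpha>^j)^N = \<gamma>^(2^K)"
    proof -
      have "(\<alpha>^j)^N = \<alpha>^(N*j)" by (simp add: power_mult[symmetric] mult.commute)
      also have "\<dots> = \<alpha>^(N*(j mod m))" by (rule bper)
      also have "\<dots> = \<alpha>^(N*(r*2^K))" using jm bper K_def by simp
      also have "\<dots> = \<gamma>^(2^K)" unfolding \<gamma>_def by (simp add: power_mult[symmetric] mult.assoc)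
      finally show ?thesis .
    qed
    have Y: "(\<alpha>^j)^(b*N) = (\<gamma>^b)^(2^K)"
    proof -
      have "(\<alpha>^j)^(b*N) = ((\<alpha>^j)^N)^b" by (metis power_mult mult.commute)
      also have "\<dots> = (\<gamma>^b)^(2^K)" unfolding X by (metis power_mult mult.commute)
      finally show ?thesis .
    qed
    have "poly P (\<alpha>^j) = 1 + \<gamma>^(2^K) + (\<gamma>^b)^(2^K)"
      by (simp only: polyP X Y)
    also have "\<dots> = (1 + \<gamma> + \<gamma>^b)^(2^K)" by (simp only: char2_frob[OF char2] power_one)
    also have "\<dots> = 0" using b(3) by simp
    finally show ?thesis .
  qed
  have disj: "\<forall>t\<in>{1..s}. \<forall>u\<in>{1..s}. t \<noteq> u \<longrightarrow> C t \<inter> C u = {}"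
  proof (intro ballI impI)
    fix t u assume tu: "t \<in> {1..s}" "u \<in> {1..s}" "t \<noteq> u"
    show "C t \<inter> C u = {}"
    proof (rule ccontr)
      assume "C t \<inter> C u \<noteq> {}"
      then obtain j where "j \<in> C t" "j \<in> C u" by auto
      hence "i u \<in> cyc_coset (i t) n" using coset_disj[OF n_odd] it_lt[OF tu(2)] unfolding C_def by blast
      thus False using i_cosets tu by blast
    qed
  qed
  define U where "U = (\<Union>t\<in>{1..s}. C t)"
  have Usub: "U \<subseteq> {..<n}" unfolding U_def C_def using coset_sub[OF n_pos] by auto
  have injU: "inj_on (\<lambda>k. \<alpha>^k) U" using pow_inj[OF alpha n_pos] Usub inj_on_subset by blast
  have "G = (\<Prod>t\<in>{1..s}. \<Prod>j\<in>C t. [:-(\<alpha>^j),1:])" unfolding G_def min_poly_def C_def by simp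
  also have "\<dots> = (\<Prod>j\<in>U. [:-(\<alpha>^j),1:])" unfolding U_def
    using prod.UNION_disjoint[of "{1..s}" C "\<lambda>j. [:-(\<alpha>^j),1:]"] Cfin disj by simp
  also have "\<dots> = (\<Prod>y\<in>(\<lambda>k. \<alpha>^k) ` U. [:-y,1:])" using prod.reindex[OF injU, of "\<lambda>y. [:-y,1:]"] by simp
  finally have Geq: "G = (\<Prod>y\<in>(\<lambda>k. \<alpha>^k) ` U. [:-y,1:])" .
  have "G dvd P" unfolding Geq
  proof (rule linprod_dvd)
    show "finite ((\<lambda>k. \<alpha>^k) ` U)" using Usub finite_subset by blast
    show "\<forall>y\<in>(\<lambda>k. \<alpha>^k) ` U. poly P y = 0"
    proof
      fix y assume "y \<in> (\<lambda>k. \<alpha>^k) ` U"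
      then obtain j t where "t \<in> {1..s}" "j \<in> C t" "y = \<alpha>^j" unfolding U_def by blast
      thus "poly P y = 0" using roots by simp
    qed
  qed
  hence cC: "c \<in> cyclic_code n G" unfolding cyclic_code_def P_def using cw(1) by simp
  have part1: "min_dist (cyclic_code n G) \<le> 3"
    unfolding min_dist_def by (rule Least_le) (intro bexI[of _ c] conjI cw(2,3) cC)
  show ?thesis
  proof (intro conjI impI)
    show "min_dist (cyclic_code n (\<Prod>t\<in>{1..s}. min_poly \<alpha> n (i t))) \<le> 3" using part1 by (simp only: G_def)
    assume gcd1: "Gcd (insert n (i ` {1..s})) = 1"
    have s1: "1 \<le> s"
    proof (rule ccontr)
      assume "\<not> 1 \<le> s" hence "{1..s} = {}" by auto
      hence "n = 1" using gcd1 by simp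
      moreover have "m \<le> n" using nN N0 by simp
      ultimately show False using m1 by simp
    qed
    have rootsG: "poly (map_poly of_bit c' :: 'a poly) (\<alpha>^(i t)) = 0"
      if "c' \<in> cyclic_code n G" "t \<in> {1..s}" for c' t
    proof -
      have "G dvd map_poly of_bit c'" using that(1) unfolding cyclic_code_def by simp
      moreover have "min_poly \<alpha> n (i t) dvd G" unfolding G_def using that(2) by (intro dvd_prodI) auto
      moreover have "[:-(\<alpha>^(i t)),1:] dvd min_poly \<alpha> n (i t)"
      proof -
        have "i t = i t * 2^0 mod n" using it_lt[OF that(2)] by simp
        hence "i t \<in> cyc_coset (i t) n" unfolding cyc_coset_def by blast
        thus ?thesis unfolding min_poly_def by (rule dvd_prodI[rotated]) (use Cfin[unfolded C_def] in auto)
      qed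
      ultimately show ?thesis by (metis dvd_trans poly_eq_0_iff_dvd)
    qed
    have t1: "1 \<in> {1..s}" using s1 by simp
    have wt: "3 \<le> weight c'" if cC': "c' \<in> cyclic_code n G" "c' \<noteq> 0" for c'
    proof -
      define K where "K = {k. coeff c' k \<noteq> 0}"
      have degn: "degree c' < n" using cC' unfolding cyclic_code_def by simp
      have Ksub: "K \<subseteq> {..degree c'}" unfolding K_def by (auto intro!: le_degree simp del: bit_not_zero_iff)
      have Kfin: "finite K" using Ksub finite_subset by blast
      have "degree c' \<in> K" using that(2) unfolding K_def by (simp del: bit_not_zero_iff)
      hence Kne: "K \<noteq> {}" by auto
      have Kn: "k < n" if "k \<in> K" for k using Ksub that degn by auto
      have coefK: "coeff c' k = (if k \<in> K then 1 else 0)" for k unfolding K_def by auto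
      have mp: "coeff (map_poly of_bit c' :: 'a poly) k = (if k \<in> K then 1 else 0)" for k
        by (simp add: coeff_map_poly coefK)
      show ?thesis
      proof (rule ccontr)
        assume "\<not> 3 \<le> weight c'"
        moreover have "card K \<noteq> 0" using Kfin Kne by simp
        ultimately have "card K = 1 \<or> card K = 2" unfolding weight_def K_def[symmetric] by linarith
        thus False
        proof
          assume "card K = 1"
          then obtain k where Kk: "K = {k}" by (rule card_1_singletonE)
          have "map_poly of_bit c' = (Polynomial.monom 1 k :: 'a poly)"
            by (rule poly_eqI) (unfold mp, simp add: Kk coeff_monom)
          hence "poly (map_poly of_bit c' :: 'a poly) (\<alpha>^(i 1)) = (\<alpha>^(i 1))^k" by (simp add: poly_monom)
          thus False using rootsG[OF cC'(1) t1] a0 by simp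
        next
          assume "card K = 2"
          then obtain x1 x2 where x12: "K = {x1, x2}" "x1 \<noteq> x2" unfolding card_2_iff by blast
          obtain a b' where ab: "K = {a, b'}" "a < b'"
          proof (cases "x1 < x2")
            case True thus ?thesis using that x12 by blast
          next
            case False
            hence "x2 < x1" using x12(2) by simp
            moreover have "K = {x2, x1}" using x12 by blast
            ultimately show ?thesis using that by blast
          qed
          have mpe: "map_poly of_bit c' = (Polynomial.monom 1 a + Polynomial.monom 1 b' :: 'a poly)"
            by (rule poly_eqI) (unfold mp, use ab in \<open>auto simp: coeff_monom\<close>)
          have "b' < n" using Kn ab by simp
          have dv: "n dvd (b' - a) * x" if x: "x \<in> insert n (i ` {1..s})" for x
          proof (cases "x = n")
            case True thus ?thesis by simp
          next
            case False
            then obtain t where t: "t \<in> {1..s}" "x = i t" using x by auto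
            define y where "y = \<alpha>^(i t)"
            have y0: "y \<noteq> 0" unfolding y_def using a0 by simp
            have py: "poly (map_poly of_bit c' :: 'a poly) y = y^a + y^b'" unfolding mpe by (simp add: poly_monom)
            have "y^a + y^b' = 0" using rootsG[OF cC'(1) t(1)] py unfolding y_def by simp
            moreover have "y^a + y^a = 0" by (rule char2_add_self[OF char2])
            ultimately have "y^b' = y^a" by (metis add_left_cancel)
            moreover have "y^b' = y^a * y^(b'-a)" using ab(2) by (simp add: power_add[symmetric])
            ultimately have "y^a * y^(b'-a) = y^a * 1" by simp
            moreover have "y^a \<noteq> 0" using y0 by simp
            ultimately have "y^(b'-a) = 1" by (rule mult_left_cancel[THEN iffD1, rotated])
            hence "\<alpha>^(i t * (b'-a)) = 1" unfolding y_def by (simp only: power_mult)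
            hence "n dvd i t * (b'-a)" using prim_root_pow_eq_1[OF alpha n_pos, of "i t * (b'-a)"] by blast
            thus ?thesis using t by (metis mult.commute)
          qed
          have "n dvd Gcd ((*) (b' - a) ` insert n (i ` {1..s}))" by (rule Gcd_greatest) (use dv in auto)
          also have "Gcd ((*) (b' - a) ` insert n (i ` {1..s})) = b' - a" by (simp only: Gcd_mult gcd1) simp
          finally have "n \<le> b' - a" using ab(2) by (simp add: dvd_imp_le)
          thus False using \<open>b' < n\<close> by simp
        qed
      qed
    qed
    have "min_dist (cyclic_code n G) = 3"
      unfolding min_dist_def
    proof (rule Least_equality)
      show "\<exists>c\<in>cyclic_code n G. c \<noteq> 0 \<and> weight c = 3" using cC cw(2,3) by blast
      show "\<And>y. \<exists>c\<in>cyclic_code n G. c \<noteq> 0 \<and> weight c = y \<Longrightarrow> 3 \<le> y" using wt by blast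
    qed
    thus "min_dist (cyclic_code n (\<Prod>t\<in>{1..s}. min_poly \<alpha> n (i t))) = 3" by (simp only: G_def)
  qed
qed

end
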